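(* Let $\delta>0$ and consider the boundary value problem $$\phi''(x)-\delta\, e^{-\phi(x)}=0,\quad 0<x<1,\qquad \phi'(0)=0,\qquad \phi(1)=0,$$ for a twice continuously differentiable function $\phi:[0,1]\to\mathbb{R}$. Let $\delta_c\approx 0.878$ be the unique positive number satisfying $$1=\sqrt{\frac{\delta_c}{2}}\,\sinh\!\left(\sqrt{\frac{\delta_c+2}{2}}\right).$$ Then the problem has exactly two solutions if $0<\delta<\delta_c$, exactly one solution if $\delta=\delta_c$, and no solution if $\delta>\delta_c$. Every solution has the form $\phi(x)=\phi_0+2\ln\cosh\!\left(\sqrt{\tfrac{\delta}{2}}\,e^{-\phi_0/2}x\right)$, where $\phi_0=\phi(0)$ satisfies $e^{-\phi_0/2}=\cosh\!\left(\sqrt{\tfrac{\delta}{2}}\,e^{-\phi_0/2}\right)$.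
   Context: This is the non-dimensionalized steady-state equation for the liquid (ionic) potential in a one-dimensional molten carbonate fuel cell cathode, with the solid potential, porosity and gas concentrations taken constant, so that $\delta=\frac{\nu L^2}{\sigma_l\epsilon_l^b}\frac{RT}{n\alpha F}i_0 c_{O_2}c_{CO_2}e^{\bar\phi_s}$ is inversely proportional to the liquid conductivity $\sigma_l$; the condition $\phi'(0)=0$ is a no-flux condition and $\phi(1)=0$ a Dirichlet condition. Consequently, for sufficiently small liquid conductivity no steady state exists. *)

theory Defs
  imports Complex_Main
begin

definition is_solution :: "real \<Rightarrow> (real \<Rightarrow> real) \<Rightarrow> bool" where
  "is_solution \<delta> \<phi> \<longleftrightarrow>
     (\<exists>\<phi>1 \<phi>2.
        (\<forall>x\<in>{0..1}. (\<phi> has_real_derivative \<phi>1 x) (at x within {0..1})) \<and>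
        (\<forall>x\<in>{0..1}. (\<phi>1 has_real_derivative \<phi>2 x) (at x within {0..1})) \<and>
        continuous_on {0..1} \<phi>2 \<and>
        (\<forall>x\<in>{0<..<1}. \<phi>2 x - \<delta> * exp (- \<phi> x) = 0) \<and>
        \<phi>1 0 = 0 \<and> \<phi> 1 = 0)"

text \<open>Solutions are functions on [0,1]; we normalise them to be 0 outside [0,1]
so that distinct solutions correspond to distinct functions on [0,1].\<close>
definition solutions :: "real \<Rightarrow> (real \<Rightarrow> real) set" where
  "solutions \<delta> = {\<phi>. is_solution \<delta> \<phi> \<and> (\<forall>x. x \<notin> {0..1} \<longrightarrow> \<phi> x = 0)}"

definition delta_c :: real where
  "delta_c = (THE d. d > 0 \<and> 1 = sqrt (d / 2) * sinh (sqrt ((d + 2) / 2)))"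

end

theory Submission
  imports Defs "HOL-Analysis.Analysis"
begin


lemma sol_form:
  assumes dpos: "\<delta> > 0" and sol: "is_solution \<delta> \<phi>"
  shows "(\<forall>x\<in>{0..1}. \<phi> x = \<phi> 0 + 2 * ln (cosh (sqrt (\<delta> / 2) * exp (- \<phi> 0 / 2) * x)))
         \<and> exp (- \<phi> 0 / 2) = cosh (sqrt (\<delta> / 2) * exp (- \<phi> 0 / 2))"
proof -
  define S :: "real set" where "S = {0..1}"
  obtain \<phi>1 \<phi>2 where d1: "\<And>x. x\<in>S \<Longrightarrow> (\<phi> has_real_derivative \<phi>1 x) (at x within S)"
    and d2: "\<And>x. x\<in>S \<Longrightarrow> (\<phi>1 has_real_derivative \<phi>2 x) (at x within S)"
    and c2: "continuous_on S \<phi>2" and ode: "\<And>x. x\<in>{0<..<1} \<Longrightarrow> \<phi>2 x - \<delta> * exp (- \<phi> x) = 0"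
    and b0: "\<phi>1 0 = 0" and b1: "\<phi> 1 = 0"
    using sol unfolding is_solution_def S_def by blast
  have c0: "continuous_on S \<phi>"
    using d1 by (meson DERIV_continuous continuous_on_eq_continuous_within)
  have ode2: "\<phi>2 x = \<delta> * exp (- \<phi> x)" if "x \<in> S" for x
  proof -
    have "continuous_on (closure {0<..<1::real}) (\<lambda>x. \<phi>2 x - \<delta> * exp (- \<phi> x))"
      using c0 c2 unfolding S_def by (auto intro!: continuous_intros)
    from continuous_constant_on_closure[OF this ode, of x] that show ?thesis
      unfolding S_def by simp
  qed
  define E where "E x = \<phi>1 x ^ 2 / 2 + \<delta> * exp (- \<phi> x)" for x
  have dE: "(E has_real_derivative 0) (at x within S)" if "x \<in> S" for x
  proof -
    have "(E has_real_derivative (\<phi>1 x * \<phi>2 x + \<delta> * (exp (- \<phi> x) * (- \<phi>1 x)))) (at x within S)"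
      unfolding E_def[abs_def]
      by (rule derivative_eq_intros d1 d2 that refl | simp)+
    then show ?thesis using ode2[OF that] by (simp add: algebra_simps)
  qed
  have convS: "convex S" unfolding S_def by simp
  obtain cE where cE: "\<And>x. x \<in> S \<Longrightarrow> E x = cE"
    using has_field_derivative_zero_constant[OF convS dE] by blast
  have S0: "0 \<in> S" and S1: "1 \<in> S" unfolding S_def by auto
  have Ex: "\<phi>1 x ^ 2 / 2 + \<delta> * exp (- \<phi> x) = \<delta> * exp (- \<phi> 0)" if "x \<in> S" for x
    using cE[OF that] cE[OF S0] b0 unfolding E_def by simp
  define p0 where "p0 = \<phi> 0"
  define a where "a = sqrt (\<delta> / 2) * exp (- p0 / 2)"
  have apos: "a > 0" unfolding a_def using dpos by simp
  have a2: "2 * a ^ 2 = \<delta> * exp (- p0)"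
    unfolding a_def using dpos by (simp add: power_mult_distrib exp_double[symmetric] power2_eq_square[symmetric] flip: exp_add)
  define y where "y x = exp ((\<phi> x - p0) / 2)" for x
  define s where "s x = y x * \<phi>1 x / (2 * a)" for x
  have dy: "(y has_real_derivative a * s x) (at x within S)" if "x \<in> S" for x
  proof -
    have "(y has_real_derivative (exp ((\<phi> x - p0) / 2) * (\<phi>1 x / 2))) (at x within S)"
      unfolding y_def[abs_def]
      by (auto intro!: derivative_eq_intros d1 that)
    then show ?thesis using apos unfolding s_def y_def by (simp add: field_simps)
  qed
  have ds: "(s has_real_derivative a * y x) (at x within S)" if "x \<in> S" for x
  proof -
    have "(s has_real_derivative ((a * s x * \<phi>1 x + y x * \<phi>2 x) / (2 * a))) (at x within S)"
    proof -
      have "((\<lambda>x. y x * \<phi>1 x / (2 * a)) has_real_derivative ((a * s x * \<phi>1 x + y x * \<phi>2 x) / (2 * a))) (at x within S)"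
        using DERIV_mult[OF dy[OF that] d2[OF that], THEN DERIV_cdivide[where c="2*a"]] by (simp add: algebra_simps)
      then show ?thesis unfolding s_def[abs_def] .
    qed
    also have "(a * s x * \<phi>1 x + y x * \<phi>2 x) / (2 * a) = y x * (\<phi>1 x ^ 2 / 2 + \<delta> * exp (- \<phi> x)) / (2 * a)"
      using apos ode2[OF that] unfolding s_def by (simp add: field_simps power2_eq_square)
    also have "\<dots> = a * y x"
      using Ex[OF that] a2 apos unfolding p0_def by (simp add: field_simps power2_eq_square)
    finally show ?thesis .
  qed
  have dexp: "((\<lambda>x. exp (c * x)) has_real_derivative exp (c * x) * c) (at x within S)" for c x
    by (auto intro!: derivative_eq_intros)
  have dh1: "((\<lambda>x. (y x + s x) * exp (- a * x)) has_real_derivative 0) (at x within S)" if "x \<in> S" for x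
  proof -
    have "((\<lambda>x. (y x + s x) * exp (- a * x)) has_real_derivative
        ((a * s x + a * y x) * exp (- a * x) + (exp (- a * x) * (- a)) * (y x + s x))) (at x within S)"
      by (intro DERIV_mult DERIV_add dy ds that dexp)
    then show ?thesis by (simp add: algebra_simps)
  qed
  have dh2: "((\<lambda>x. (y x - s x) * exp (a * x)) has_real_derivative 0) (at x within S)" if "x \<in> S" for x
  proof -
    have "((\<lambda>x. (y x - s x) * exp (a * x)) has_real_derivative
        ((a * s x - a * y x) * exp (a * x) + (exp (a * x) * a) * (y x - s x))) (at x within S)"
      by (intro DERIV_mult DERIV_diff dy ds that dexp)
    then show ?thesis by (simp add: algebra_simps)
  qed
  obtain k1 where k1: "\<And>x. x \<in> S \<Longrightarrow> (y x + s x) * exp (- a * x) = k1"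
    using has_field_derivative_zero_constant[OF convS dh1] by blast
  obtain k2 where k2: "\<And>x. x \<in> S \<Longrightarrow> (y x - s x) * exp (a * x) = k2"
    using has_field_derivative_zero_constant[OF convS dh2] by blast
  have y0: "y 0 = 1" and s0: "s 0 = 0" unfolding y_def s_def p0_def using b0 by auto
  have yx: "y x = cosh (a * x)" if "x \<in> S" for x
  proof -
    have "y x + s x = exp (a * x)" using k1[OF that] k1[OF S0] y0 s0
      by (simp add: field_simps exp_minus)
    moreover have "y x - s x = exp (- (a * x))" using k2[OF that] k2[OF S0] y0 s0
      by (simp add: field_simps exp_minus)
    ultimately show ?thesis by (simp add: cosh_field_def field_simps)
  qed
  have phx: "\<phi> x = p0 + 2 * ln (cosh (a * x))" if "x \<in> S" for x
  proof -
    have "ln (y x) = (\<phi> x - p0) / 2" unfolding y_def by simp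
    then show ?thesis using yx[OF that] by simp
  qed
  have "exp (- p0 / 2) = cosh a" using yx[OF S1] b1 unfolding y_def by simp
  moreover have "\<forall>x\<in>{0..1}. \<phi> x = p0 + 2 * ln (cosh (a * x))"
    using phx unfolding S_def by blast
  ultimately show ?thesis unfolding a_def p0_def by blast
qed


definition kk :: "real \<Rightarrow> real" where "kk a = cosh a - a * sinh a"

lemma kk_deriv: "(kk has_real_derivative (- t * cosh t)) (at t)"
  unfolding kk_def[abs_def] by (auto intro!: derivative_eq_intros)

lemma kk_cont: "continuous_on S kk"
  unfolding kk_def[abs_def] by (auto intro!: continuous_intros)

lemma kk_strict: assumes "0 \<le> x" "x < y" shows "kk y < kk x"
proof -
  have "\<exists>d. DERIV kk t :> d \<and> d < 0" if "x < t" "t < y" for t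
    using kk_deriv[of t] that assms by (intro exI[of _ "- t * cosh t"]) auto
  then show ?thesis using DERIV_neg_imp_decreasing_open[OF assms(2) _ kk_cont] by blast
qed

lemma kk1: "kk 1 > 0"
  unfolding kk_def using cosh_minus_sinh[of "1::real"] by simp

lemma kk2: "kk 2 < 0"
proof -
  have e: "exp (4::real) \<ge> 5" using exp_ge_add_one_self[of "4::real"] by simp
  have "exp (2::real) * exp 2 = exp 4" by (simp flip: exp_add)
  hence "3 * exp (-2::real) < exp 2"
    using e by (simp add: exp_minus field_simps)
  thus ?thesis unfolding kk_def by (simp add: cosh_field_def sinh_field_def field_simps)
qed

definition astar :: real where "astar = (THE a. a > 0 \<and> kk a = 0)"

lemma astar_ex1: "\<exists>!a. a > 0 \<and> kk a = 0"
proof -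
  obtain a where a: "1 \<le> a" "a \<le> 2" "kk a = 0"
    using IVT2'[of kk 2 0 1] kk1 kk2 kk_cont by force
  show ?thesis
  proof (rule ex1I[of _ a])
    show "a > 0 \<and> kk a = 0" using a by simp
    fix b assume b: "b > 0 \<and> kk b = 0"
    show "b = a"
    proof (rule ccontr)
      assume "b \<noteq> a"
      then consider "b < a" | "a < b" by linarith
      thus False using kk_strict[of b a] kk_strict[of a b] a b by cases auto
    qed
  qed
qed

lemma astar: "astar > 0" "kk astar = 0"
  using theI'[OF astar_ex1] unfolding astar_def by auto

lemma astar_gt1: "astar > 1"
proof (rule ccontr)
  assume "\<not> astar > 1"
  hence "astar \<le> 1" by simp
  hence "kk 1 \<le> kk astar"
    using kk_strict[of astar 1] astar by (cases "astar = 1") auto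
  thus False using kk1 astar by simp
qed

lemma kk_pos: "0 \<le> t \<Longrightarrow> t < astar \<Longrightarrow> kk t > 0"
  using kk_strict[of t astar] astar by simp
lemma kk_neg: "astar < t \<Longrightarrow> kk t < 0"
  using kk_strict[of astar t] astar by simp

lemma astar_eq: "cosh astar = astar * sinh astar"
  using astar unfolding kk_def by simp

lemma sinh_astar_pos: "sinh astar > 0"
  using astar by simp

lemma dc_P: "2 * astar ^ 2 - 2 > 0 \<and> 1 = sqrt ((2 * astar ^ 2 - 2) / 2) * sinh (sqrt ((2 * astar ^ 2 - 2 + 2) / 2))"
proof -
  let ?a = astar
  have a1: "?a > 1" by (rule astar_gt1)
  have sq: "sqrt ((2 * ?a ^ 2 - 2 + 2) / 2) = ?a" using a1 by simp
  have "?a ^ 2 * sinh ?a ^ 2 = sinh ?a ^ 2 + 1"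
    using astar_eq cosh_square_eq[of ?a] by (simp add: power_mult_distrib)
  hence e: "(?a ^ 2 - 1) * sinh ?a ^ 2 = 1" by (simp add: algebra_simps)
  have "sqrt ((2 * ?a ^ 2 - 2) / 2) * sinh ?a = sqrt ((?a ^ 2 - 1) * sinh ?a ^ 2)"
    using sinh_astar_pos by (simp add: real_sqrt_mult)
  also have "\<dots> = 1" using e by simp
  finally show "2 * ?a ^ 2 - 2 > 0 \<and> 1 = sqrt ((2 * ?a ^ 2 - 2) / 2) * sinh (sqrt ((2 * ?a ^ 2 - 2 + 2) / 2))"
    using sq a1 by (simp add: power_less_one_iff one_less_power)
qed

lemma dc_uniq: assumes d: "d > 0 \<and> 1 = sqrt (d / 2) * sinh (sqrt ((d + 2) / 2))"
  shows "d = 2 * astar ^ 2 - 2"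
proof -
  define b where "b = sqrt ((d + 2) / 2)"
  have dpos: "d > 0" using d by blast
  have b1: "b > 1" unfolding b_def using dpos by (simp add: real_less_rsqrt)
  have b2: "b ^ 2 = (d + 2) / 2" unfolding b_def using dpos by simp
  have e1: "d / 2 = b ^ 2 - 1" using b2 by simp
  have e2: "1 = sqrt (d / 2) * sinh b" using d unfolding b_def by blast
  have h: "1 = sqrt (b ^ 2 - 1) * sinh b" using e2 unfolding e1 .
  have q: "b ^ 2 - 1 > 0" using b1 by (simp add: one_less_power)
  have "1 = (sqrt (b ^ 2 - 1) * sinh b) ^ 2" unfolding h[symmetric] by simp
  also have "\<dots> = (b ^ 2 - 1) * sinh b ^ 2" using q by (simp add: power_mult_distrib)
  finally have f: "1 = (b ^ 2 - 1) * sinh b ^ 2" .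
  from f[symmetric] have "(b * sinh b) ^ 2 = cosh b ^ 2"
    using cosh_square_eq[of b] by (simp add: power_mult_distrib algebra_simps)
  moreover have "b * sinh b \<ge> 0" using b1 by (intro mult_nonneg_nonneg) auto
  ultimately have "b * sinh b = cosh b"
    using power2_eq_iff_nonneg[of "b * sinh b" "cosh b"] by simp
  hence "kk b = 0" unfolding kk_def by simp
  hence "astar = b" unfolding astar_def using the1_equality[OF astar_ex1, of b] b1 by simp
  thus "d = 2 * astar ^ 2 - 2" using b2 by (simp add: algebra_simps)
qed

lemma dc_ex1: "\<exists>!d::real. d > 0 \<and> 1 = sqrt (d / 2) * sinh (sqrt ((d + 2) / 2))"
  using dc_P dc_uniq by (intro ex1I[of _ "2 * astar ^ 2 - 2"]) blast+

lemma delta_c_eq: "delta_c = 2 * astar ^ 2 - 2"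
  unfolding delta_c_def by (rule dc_uniq[OF theI'[OF dc_ex1]])

definition gg :: "real \<Rightarrow> real" where "gg a = a / cosh a"

lemma gg_deriv: "(gg has_real_derivative kk t / cosh t ^ 2) (at t)"
proof -
  have "(gg has_real_derivative (1 * cosh t - t * sinh t) / (cosh t * cosh t)) (at t)"
    unfolding gg_def[abs_def] by (rule DERIV_divide) (auto intro!: derivative_eq_intros)
  thus ?thesis unfolding kk_def by (simp add: power2_eq_square)
qed

lemma gg_cont: "continuous_on S gg"
  unfolding gg_def[abs_def] by (auto intro!: continuous_intros)

lemma gg_inc: assumes "0 \<le> x" "x < y" "y \<le> astar" shows "gg x < gg y"
proof -
  have "\<exists>d. DERIV gg t :> d \<and> d > 0" if "x < t" "t < y" for t
    using gg_deriv[of t] kk_pos[of t] that assms by (intro exI[of _ "kk t / cosh t ^ 2"]) auto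
  then show ?thesis using DERIV_pos_imp_increasing_open[OF assms(2) _ gg_cont] by blast
qed

lemma gg_dec: assumes "astar \<le> x" "x < y" shows "gg y < gg x"
proof -
  have "\<exists>d. DERIV gg t :> d \<and> d < 0" if "x < t" "t < y" for t
    using gg_deriv[of t] kk_neg[of t] that assms by (intro exI[of _ "kk t / cosh t ^ 2"]) (auto simp: divide_neg_pos)
  then show ?thesis using DERIV_neg_imp_decreasing_open[OF assms(2) _ gg_cont] by blast
qed

lemma gg_max: "gg astar = sqrt (delta_c / 2)"
proof -
  have a1: "astar > 1" by (rule astar_gt1)
  have sq: "sqrt ((2 * astar ^ 2 - 2 + 2) / 2) = astar" using a1 by simp
  have "1 = sqrt (delta_c / 2) * sinh astar" using dc_P sq unfolding delta_c_eq by simp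
  hence "sqrt (delta_c / 2) = 1 / sinh astar" using sinh_astar_pos by (simp add: field_simps)
  moreover have "gg astar = 1 / sinh astar"
    unfolding gg_def astar_eq using a1 sinh_astar_pos by simp
  ultimately show ?thesis by simp
qed

lemma gg_small: assumes "b > 0" shows "gg b < 8 / b"
proof -
  have "exp b = exp (b / 2) ^ 2" by (simp flip: exp_add exp_double add: power2_eq_square)
  moreover have "exp (b / 2) \<ge> 1 + b / 2" by (rule exp_ge_add_one_self)
  ultimately have "exp b \<ge> (1 + b / 2) ^ 2" using assms by (simp add: power_mono)
  moreover have "(1 + b / 2) ^ 2 > b ^ 2 / 4" using assms by (simp add: power2_eq_square field_simps)
  ultimately have "exp b > b ^ 2 / 4" by linarith
  moreover have "cosh b \<ge> exp b / 2" unfolding cosh_field_def by simp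
  ultimately have c: "cosh b > b ^ 2 / 8" by linarith
  have "gg b = b / cosh b" unfolding gg_def ..
  also have "\<dots> < b / (b ^ 2 / 8)" using c assms by (intro divide_strict_left_mono) auto
  also have "\<dots> = 8 / b" using assms by (simp add: power2_eq_square field_simps)
  finally show ?thesis .
qed



definition Phi :: "real \<Rightarrow> real \<Rightarrow> real" where
  "Phi a x = (if x \<in> {0..1} then 2 * ln (cosh (a * x)) - 2 * ln (cosh a) else 0)"

lemma exp_2ln: "K > (0::real) \<Longrightarrow> exp (2 * ln K) = K ^ 2"
  by (subst mult_2) (simp only: exp_add exp_ln power2_eq_square)

lemma Phi_sol: assumes dpos: "\<delta> > 0" and apos: "a > 0" and g: "gg a = sqrt (\<delta> / 2)"
  shows "Phi a \<in> solutions \<delta>"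
proof -
  define S :: "real set" where "S = {0..1}"
  define \<psi> where "\<psi> x = 2 * ln (cosh (a * x)) - 2 * ln (cosh a)" for x
  define \<phi>1 where "\<phi>1 x = 2 * (sinh (a * x) * a / cosh (a * x))" for x
  define \<phi>2 where "\<phi>2 x = 2 * a ^ 2 / cosh (a * x) ^ 2" for x
  have eq: "Phi a x = \<psi> x" if "x \<in> S" for x using that unfolding Phi_def \<psi>_def S_def by simp
  have d1: "(Phi a has_real_derivative \<phi>1 x) (at x within S)" if "x \<in> S" for x
  proof -
    have "(\<psi> has_real_derivative \<phi>1 x) (at x)"
      unfolding \<psi>_def[abs_def] \<phi>1_def by (auto intro!: derivative_eq_intros)
    hence "(\<psi> has_real_derivative \<phi>1 x) (at x within S)" by (rule has_field_derivative_at_within)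
    then show ?thesis by (rule has_field_derivative_transform_within[of _ _ _ _ 1]) (use that eq in auto)
  qed
  have d2: "(\<phi>1 has_real_derivative \<phi>2 x) (at x within S)" if "x \<in> S" for x
  proof -
    have "(\<phi>1 has_real_derivative 2 * ((cosh (a * x) * a * a * cosh (a * x) - sinh (a * x) * a * (sinh (a * x) * a)) / (cosh (a * x) * cosh (a * x)))) (at x)"
      unfolding \<phi>1_def[abs_def] by (auto intro!: derivative_eq_intros)
    moreover have "2 * ((cosh (a * x) * a * a * cosh (a * x) - sinh (a * x) * a * (sinh (a * x) * a)) / (cosh (a * x) * cosh (a * x))) = \<phi>2 x"
      unfolding \<phi>2_def using cosh_square_eq[of "a * x"] by (simp add: power2_eq_square algebra_simps)
    ultimately show ?thesis by (simp add: has_field_derivative_at_within)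
  qed
  have c2: "continuous_on S \<phi>2" unfolding \<phi>2_def[abs_def] by (auto intro!: continuous_intros)
  have dl: "\<delta> = 2 * a ^ 2 / cosh a ^ 2"
  proof -
    have "sqrt (\<delta> / 2) ^ 2 = (a / cosh a) ^ 2" using g unfolding gg_def by simp
    thus ?thesis using dpos by (simp add: power_divide field_simps)
  qed
  have ode: "\<phi>2 x - \<delta> * exp (- Phi a x) = 0" if "x \<in> {0<..<1}" for x
  proof -
    have "exp (- Phi a x) = exp (2 * ln (cosh a)) / exp (2 * ln (cosh (a * x)))"
      using that unfolding Phi_def by (simp add: exp_diff)
    also have "\<dots> = cosh a ^ 2 / cosh (a * x) ^ 2" by (simp add: exp_2ln)
    finally show ?thesis unfolding \<phi>2_def dl by simp
  qed
  have p0: "\<phi>1 0 = 0" unfolding \<phi>1_def by simp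
  have p1: "Phi a 1 = 0" unfolding Phi_def by simp
  have "is_solution \<delta> (Phi a)"
    unfolding is_solution_def
    using d1 d2 c2 ode p0 p1 unfolding S_def by blast
  thus ?thesis unfolding solutions_def Phi_def by auto
qed

lemma sol_Phi: assumes dpos: "\<delta> > 0" and sol: "\<phi> \<in> solutions \<delta>"
  shows "\<exists>a>0. gg a = sqrt (\<delta> / 2) \<and> \<phi> = Phi a"
proof -
  have iss: "is_solution \<delta> \<phi>" and out: "\<And>x. x \<notin> {0..1} \<Longrightarrow> \<phi> x = 0"
    using sol unfolding solutions_def by auto
  define c where "c = sqrt (\<delta> / 2)"
  define t where "t = exp (- \<phi> 0 / 2)"
  have F: "\<forall>x\<in>{0..1}. \<phi> x = \<phi> 0 + 2 * ln (cosh (c * t * x))" and T: "t = cosh (c * t)"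
    using sol_form[OF dpos iss] unfolding c_def t_def by blast+
  define a where "a = c * t"
  have cpos: "c > 0" unfolding c_def using dpos by simp
  have tpos: "t > 0" unfolding t_def by simp
  have apos: "a > 0" unfolding a_def using cpos tpos by simp
  have ga: "gg a = c" unfolding gg_def a_def using T[symmetric] tpos by simp
  have "ln t = - \<phi> 0 / 2" unfolding t_def by simp
  hence p0: "\<phi> 0 = - 2 * ln (cosh a)" using T[symmetric] unfolding a_def by simp
  have "\<phi> = Phi a"
  proof
    fix x show "\<phi> x = Phi a x"
    proof (cases "x \<in> {0..1}")
      case True
      have "\<phi> x = \<phi> 0 + 2 * ln (cosh (c * t * x))" using F True by blast
      then show ?thesis using True unfolding Phi_def a_def p0 by simp
    next
      case False
      have "Phi a x = 0" unfolding Phi_def using False by (rule if_not_P)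
      then show ?thesis using out[OF False] by simp
    qed
  qed
  thus ?thesis using apos ga unfolding c_def by blast
qed

lemma Phi_inj: assumes "a > 0" "b > 0" "Phi a = Phi b" shows "a = b"
proof -
  have "Phi a 0 = Phi b 0" using assms by simp
  hence "ln (cosh a) = ln (cosh b)" unfolding Phi_def by simp
  hence "cosh a = cosh b" by simp
  thus ?thesis using assms by simp
qed



lemma gg_lt_max: "0 \<le> a \<Longrightarrow> a \<noteq> astar \<Longrightarrow> gg a < gg astar"
  using gg_inc[of a astar] gg_dec[of astar a] by (cases "a < astar") auto

lemma gg_inj_left: "0 \<le> x \<Longrightarrow> x \<le> astar \<Longrightarrow> 0 \<le> y \<Longrightarrow> y \<le> astar \<Longrightarrow> gg x = gg y \<Longrightarrow> x = y"
  using gg_inc[of x y] gg_inc[of y x] by (cases "x < y"; cases "y < x") auto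

lemma gg_inj_right: "astar \<le> x \<Longrightarrow> astar \<le> y \<Longrightarrow> gg x = gg y \<Longrightarrow> x = y"
  using gg_dec[of x y] gg_dec[of y x] by (cases "x < y"; cases "y < x") auto

lemma gg0: "gg 0 = 0" unfolding gg_def by simp

theorem mainTheorem1:
  fixes \<delta> :: real
  assumes "\<delta> > 0"
  shows "(\<exists>!d::real. d > 0 \<and> 1 = sqrt (d / 2) * sinh (sqrt ((d + 2) / 2)))
    \<and> (\<delta> < delta_c \<longrightarrow> card (solutions \<delta>) = 2)
    \<and> (\<delta> = delta_c \<longrightarrow> card (solutions \<delta>) = 1)
    \<and> (\<delta> > delta_c \<longrightarrow> solutions \<delta> = {})
    \<and> (\<forall>\<phi>\<in>solutions \<delta>.
         (\<forall>x\<in>{0..1}. \<phi> x = \<phi> 0 + 2 * ln (cosh (sqrt (\<delta> / 2) * exp (- \<phi> 0 / 2) * x)))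
         \<and> exp (- \<phi> 0 / 2) = cosh (sqrt (\<delta> / 2) * exp (- \<phi> 0 / 2)))"
proof -
  define c where "c = sqrt (\<delta> / 2)"
  have cpos: "c > 0" unfolding c_def using assms by simp
  define A where "A = {a. a > 0 \<and> gg a = c}"
  have SA: "solutions \<delta> = Phi ` A"
  proof
    show "solutions \<delta> \<subseteq> Phi ` A"
      using sol_Phi[OF assms] unfolding A_def c_def by blast
    show "Phi ` A \<subseteq> solutions \<delta>"
      using Phi_sol[OF assms] unfolding A_def c_def by blast
  qed
  have inj: "inj_on Phi A" unfolding A_def by (rule inj_onI) (use Phi_inj in auto)
  have cardS: "card (solutions \<delta>) = card A" unfolding SA using inj by (rule card_image)
  have m: "gg astar = sqrt (delta_c / 2)" by (rule gg_max)
  have as: "astar > 0" using astar by simp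
  have P5: "\<forall>\<phi>\<in>solutions \<delta>.
         (\<forall>x\<in>{0..1}. \<phi> x = \<phi> 0 + 2 * ln (cosh (sqrt (\<delta> / 2) * exp (- \<phi> 0 / 2) * x)))
         \<and> exp (- \<phi> 0 / 2) = cosh (sqrt (\<delta> / 2) * exp (- \<phi> 0 / 2))"
    using sol_form[OF assms] unfolding solutions_def by blast
  have P2: "card (solutions \<delta>) = 2" if lt: "\<delta> < delta_c"
  proof -
    have cm: "c < gg astar" unfolding m c_def using lt by simp
    obtain a1 where a1: "0 \<le> a1" "a1 \<le> astar" "gg a1 = c"
      using IVT'[of gg 0 c astar] gg0 cpos cm as gg_cont by force
    have a1p: "a1 > 0" using a1 gg0 cpos by (cases "a1 = 0") auto
    have a1s: "a1 < astar" using a1 cm by (cases "a1 = astar") auto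
    define B where "B = astar + 8 / c + 1"
    have "8 / c > 0" using cpos by simp
    hence B1: "B > astar" "B > 0" unfolding B_def using as by linarith+
    have "gg B < 8 / B" using gg_small B1 by simp
    also have "8 / B < c"
    proof -
      have "c * B = c * astar + 8 + c" unfolding B_def using cpos by (simp add: field_simps)
      hence "8 < c * B" using cpos as by (simp add: add_pos_pos)
      thus ?thesis using B1(2) by (simp add: divide_less_eq mult.commute)
    qed
    finally have gB: "gg B < c" .
    obtain a2 where a2: "astar \<le> a2" "a2 \<le> B" "gg a2 = c"
      using IVT2'[of gg B c astar] gB cm B1 gg_cont by force
    have a2s: "a2 > astar" using a2 cm by (cases "a2 = astar") auto
    have "A = {a1, a2}"
    proof
      show "{a1, a2} \<subseteq> A" unfolding A_def using a1 a1p a2 a2s as by auto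
      show "A \<subseteq> {a1, a2}"
      proof
        fix a assume "a \<in> A"
        hence a: "a > 0" "gg a = c" unfolding A_def by auto
        show "a \<in> {a1, a2}"
        proof (cases "a \<le> astar")
          case True
          then have "a = a1" using gg_inj_left[of a a1] a a1 by auto
          thus ?thesis by simp
        next
          case False
          then have "a = a2" using gg_inj_right[of a a2] a a2 by auto
          thus ?thesis by simp
        qed
      qed
    qed
    thus ?thesis unfolding cardS using a1s a2s by simp
  qed
  have P3: "card (solutions \<delta>) = 1" if eq: "\<delta> = delta_c"
  proof -
    have cm: "c = gg astar" unfolding m c_def using eq by simp
    have "A = {astar}"
    proof
      show "{astar} \<subseteq> A" unfolding A_def using cm as by auto
      show "A \<subseteq> {astar}"
      proof
        fix a assume "a \<in> A"
        hence "a > 0" "gg a = gg astar" unfolding A_def cm by auto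
        thus "a \<in> {astar}" using gg_lt_max[of a] by (cases "a = astar") auto
      qed
    qed
    thus ?thesis unfolding cardS by simp
  qed
  have P4: "solutions \<delta> = {}" if gt: "\<delta> > delta_c"
  proof -
    have dcpos: "delta_c > 0" using dc_P unfolding delta_c_eq by simp
    have cm: "c > gg astar" unfolding m c_def using gt dcpos by simp
    have "A = {}"
    proof (rule ccontr)
      assume "A \<noteq> {}"
      then obtain a where "a > 0" "gg a = c" unfolding A_def by auto
      thus False using gg_lt_max[of a] cm by (cases "a = astar") auto
    qed
    thus ?thesis unfolding SA by simp
  qed
  show ?thesis using dc_ex1 P2 P3 P4 P5 by blast
qed

end
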